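(* Let $X$ be an $X$-set parameter, let $t\ge 0$ be an integer, let $G$ be a graph, and let $H$ be an induced subgraph of $\mathscr{X}^{\rm TAR}(G)$. If $H\cong Q_t$ (the $t$-dimensional hypercube), then $V(H)$ is an interval $[S,T]=\{R: S\subseteq R\subseteq T\}$ of length $t$ (i.e., $|T\setminus S|=t$) in the poset $(\mathcal{P}(V(G)),\subseteq)$.
   Context: All graphs are simple, finite, with nonempty vertex set. An $X$-set parameter is a graph parameter $X(G)$ defined as the minimum cardinality of an $X$-set of $G$, where the $X$-sets of each graph are subsets of its vertex set determined by some property satisfying: (1) supersets (within $V(G)$) of $X$-sets are $X$-sets; (2) the empty set is never an $X$-set; (3) an $X$-set of a disconnected graph is the union of an $X$-set of each component; (4) if $G$ has no isolated vertices, every set of $|V(G)|-1$ vertices is an $X$-set. The $X$-TAR graph $\mathscr{X}^{\rm TAR}(G)$ has as vertices all $X$-sets of $G$, with $S_1,S_2$ adjacent iff $|S_1\ominus S_2|=1$. $\mathcal{P}(V(G))$ is the power set of $V(G)$; the length of an interval is the maximum length (number of elements minus one) of a chain in it. *)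

theory Defs
  imports Main
begin

definition simple_graph :: "'a set \<Rightarrow> ('a \<Rightarrow> 'a \<Rightarrow> bool) \<Rightarrow> bool" where
  "simple_graph V E \<longleftrightarrow> finite V \<and> V \<noteq> {} \<and>
     (\<forall>x y. E x y \<longrightarrow> x \<in> V \<and> y \<in> V) \<and> (\<forall>x y. E x y \<longrightarrow> E y x) \<and> (\<forall>x. \<not> E x x)"

definition components :: "'a set \<Rightarrow> ('a \<Rightarrow> 'a \<Rightarrow> bool) \<Rightarrow> 'a set set" where
  "components V E = {{y. E\<^sup>*\<^sup>* x y} | x. x \<in> V}"

definition connected_graph :: "'a set \<Rightarrow> ('a \<Rightarrow> 'a \<Rightarrow> bool) \<Rightarrow> bool" where
  "connected_graph V E \<longleftrightarrow> (\<forall>x\<in>V. \<forall>y\<in>V. E\<^sup>*\<^sup>* x y)"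

definition restrict_edges :: "('a \<Rightarrow> 'a \<Rightarrow> bool) \<Rightarrow> 'a set \<Rightarrow> 'a \<Rightarrow> 'a \<Rightarrow> bool" where
  "restrict_edges E C = (\<lambda>x y. E x y \<and> x \<in> C \<and> y \<in> C)"

definition has_isolated :: "'a set \<Rightarrow> ('a \<Rightarrow> 'a \<Rightarrow> bool) \<Rightarrow> bool" where
  "has_isolated V E \<longleftrightarrow> (\<exists>x\<in>V. \<forall>y. \<not> E x y)"

text \<open>An X-set parameter is given by its family of X-sets: Xs V E is the set of X-sets of G=(V,E).\<close>
definition X_set_param :: "('a set \<Rightarrow> ('a \<Rightarrow> 'a \<Rightarrow> bool) \<Rightarrow> 'a set set) \<Rightarrow> bool" where
  "X_set_param Xs \<longleftrightarrow>
    (\<forall>V E. simple_graph V E \<longrightarrow>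
       Xs V E \<subseteq> Pow V
     \<and> (\<forall>S T. S \<in> Xs V E \<and> S \<subseteq> T \<and> T \<subseteq> V \<longrightarrow> T \<in> Xs V E)
     \<and> {} \<notin> Xs V E
     \<and> (\<not> connected_graph V E \<longrightarrow>
          (\<forall>S. S \<in> Xs V E \<longleftrightarrow>
               S \<subseteq> V \<and> (\<forall>C\<in>components V E. S \<inter> C \<in> Xs C (restrict_edges E C))))
     \<and> (\<not> has_isolated V E \<longrightarrow>
          (\<forall>S. S \<subseteq> V \<and> card S = card V - 1 \<longrightarrow> S \<in> Xs V E)))"

definition tar_adj :: "'b set \<Rightarrow> 'b set \<Rightarrow> bool" where
  "tar_adj S1 S2 \<longleftrightarrow> card ((S1 - S2) \<union> (S2 - S1)) = 1"

definition hypercube_verts :: "nat \<Rightarrow> nat set set" where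
  "hypercube_verts t = Pow {..<t}"

definition hypercube_adj :: "nat set \<Rightarrow> nat set \<Rightarrow> bool" where
  "hypercube_adj A B \<longleftrightarrow> card ((A - B) \<union> (B - A)) = 1"

definition induced_TAR_iso_cube :: "'a set set \<Rightarrow> nat \<Rightarrow> bool" where
  "induced_TAR_iso_cube H t \<longleftrightarrow>
    (\<exists>f. bij_betw f H (hypercube_verts t) \<and>
         (\<forall>A\<in>H. \<forall>B\<in>H. tar_adj A B \<longleftrightarrow> hypercube_adj (f A) (f B)))"

end

theory Submission
  imports Defs
begin

lemma tar_adj_ex:
  assumes "tar_adj A B"
  obtains u where "\<forall>w. w \<in> B \<longleftrightarrow> ((w \<in> A) \<noteq> (w = u))"
proof -
  from assms obtain u where "(A - B) \<union> (B - A) = {u}"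
    unfolding tar_adj_def by (meson card_1_singletonE)
  then have "\<forall>w. w \<in> B \<longleftrightarrow> ((w \<in> A) \<noteq> (w = u))" by blast
  then show ?thesis using that by blast
qed

lemma common:
  assumes "x \<noteq> y" "tar_adj Y1 Z" "tar_adj Y2 Z"
    "\<forall>w. w\<in>Y1 \<longleftrightarrow> ((w\<in>X) \<noteq> (w=x))" "\<forall>w. w\<in>Y2 \<longleftrightarrow> ((w\<in>X) \<noteq> (w=y))"
  shows "Z = X \<or> (\<forall>w. w\<in>Z \<longleftrightarrow> ((w\<in>X) \<noteq> (w=x \<or> w=y)))"
proof -
  obtain u where u: "\<forall>w. w \<in> Z \<longleftrightarrow> ((w \<in> Y1) \<noteq> (w = u))" using tar_adj_ex[OF assms(2)] by blast
  obtain v where v: "\<forall>w. w \<in> Z \<longleftrightarrow> ((w \<in> Y2) \<noteq> (w = v))" using tar_adj_ex[OF assms(3)] by blast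
  have e: "\<forall>w. ((w=x) \<noteq> (w=u)) = ((w=y) \<noteq> (w=v))" using u v assms(4,5) by blast
  show ?thesis
  proof (cases "u = x")
    case True
    then have "Z = X" using u assms(4) by blast
    then show ?thesis by blast
  next
    case False
    have "v = x" using e[rule_format, of x] False assms(1) by blast
    moreover have "u = y" using e[rule_format, of u] False \<open>v = x\<close> by blast
    ultimately show ?thesis using u assms(4) assms(1) by blast
  qed
qed

lemma tar_adj_sym: "tar_adj A B \<longleftrightarrow> tar_adj B A"
  unfolding tar_adj_def by (simp add: Un_commute)

lemma img_ins:
  assumes "inj_on a A" "x \<in> A" "C \<subseteq> A" "x \<notin> C"
  shows "w \<in> a ` (insert x C) \<longleftrightarrow> ((w \<in> a ` C) \<noteq> (w = a x))"
proof -
  have "a x \<notin> a ` C" using assms by (simp add: inj_on_image_mem_iff)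
  then show ?thesis by auto
qed

theorem lemma2p1:
  fixes Xs :: "'a set \<Rightarrow> ('a \<Rightarrow> 'a \<Rightarrow> bool) \<Rightarrow> 'a set set"
    and V :: "'a set" and E :: "'a \<Rightarrow> 'a \<Rightarrow> bool"
    and H :: "'a set set" and t :: nat
  assumes "X_set_param Xs"
    and "simple_graph V E"
    and "H \<subseteq> Xs V E"
    and "induced_TAR_iso_cube H t"
  shows "\<exists>S T. S \<subseteq> T \<and> T \<subseteq> V \<and> H = {R. S \<subseteq> R \<and> R \<subseteq> T} \<and> card (T - S) = t"
proof -
  have "Xs V E \<subseteq> Pow V" using assms(1,2) unfolding X_set_param_def by simp
  then have HV: "H \<subseteq> Pow V" using assms(3) by (rule order_trans[rotated])
  obtain f where bij: "bij_betw f H (Pow {..<t})"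
    and adj: "\<forall>A\<in>H. \<forall>B\<in>H. tar_adj A B \<longleftrightarrow> hypercube_adj (f A) (f B)"
    using assms(4) unfolding induced_TAR_iso_cube_def hypercube_verts_def by auto
  define g where "g = inv_into H f"
  have gH: "\<And>B. B \<subseteq> {..<t} \<Longrightarrow> g B \<in> H"
    unfolding g_def using bij_betw_inv_into[OF bij] bij_betwE by blast
  have fg: "\<And>B. B \<subseteq> {..<t} \<Longrightarrow> f (g B) = B"
    unfolding g_def using bij_betw_inv_into_right[OF bij] by blast
  have Himg: "H = g ` Pow {..<t}"
    unfolding g_def using bij by (metis bij_betw_def bij_betw_inv_into image_inv_into_cancel order_refl)
  have gadj: "\<And>B C. B \<subseteq> {..<t} \<Longrightarrow> C \<subseteq> {..<t} \<Longrightarrow> hypercube_adj B C \<Longrightarrow> tar_adj (g B) (g C)"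
    using adj gH fg by metis
  have ginj: "\<And>B C. B \<subseteq> {..<t} \<Longrightarrow> C \<subseteq> {..<t} \<Longrightarrow> g B = g C \<Longrightarrow> B = C"
    using fg by metis
  have hsing: "\<And>B i. hypercube_adj B (B - {i}) \<longleftrightarrow> i \<in> B"
  proof -
    fix B :: "nat set" and i
    have "(B - (B - {i})) \<union> ((B - {i}) - B) = (if i \<in> B then {i} else {})" by auto
    then show "hypercube_adj B (B - {i}) \<longleftrightarrow> i \<in> B" unfolding hypercube_adj_def by simp
  qed
  define S where "S = g {}"
  have ex: "\<forall>i\<in>{..<t}. \<exists>u. \<forall>w. w \<in> g {i} \<longleftrightarrow> ((w \<in> S) \<noteq> (w = u))"
  proof
    fix i assume "i \<in> {..<t}"
    have "hypercube_adj {i} {}" using hsing[of "{i}" i] by simp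
    then have "tar_adj (g {i}) (g {})" using gadj[of "{i}" "{}"] \<open>i \<in> {..<t}\<close> by simp
    then have "tar_adj S (g {i})" unfolding S_def tar_adj_def by (simp add: Un_commute)
    then obtain u where "\<forall>w. w \<in> g {i} \<longleftrightarrow> ((w \<in> S) \<noteq> (w = u))" by (rule tar_adj_ex)
    then show "\<exists>u. \<forall>w. w \<in> g {i} \<longleftrightarrow> ((w \<in> S) \<noteq> (w = u))" by blast
  qed
  from bchoice[OF ex] obtain a where a: "\<forall>i\<in>{..<t}. \<forall>w. w \<in> g {i} \<longleftrightarrow> ((w \<in> S) \<noteq> (w = a i))"
    by blast
  have ainj: "inj_on a {..<t}"
  proof (rule inj_onI)
    fix i j assume ij: "i \<in> {..<t}" "j \<in> {..<t}" "a i = a j"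
    have "g {i} = g {j}"
    proof (rule set_eqI)
      fix w show "w \<in> g {i} \<longleftrightarrow> w \<in> g {j}"
        using a ij by simp
    qed
    then have "{i} = {j}" using ginj[of "{i}" "{j}"] ij by simp
    then show "i = j" by simp
  qed
  define phi where "phi B = {w. (w \<in> S) \<noteq> (w \<in> a ` B)}" for B
  have main: "\<forall>B. B \<subseteq> {..<t} \<longrightarrow> card B = n \<longrightarrow> g B = phi B" for n
  proof (induction n rule: less_induct)
    case (less n)
    have IH: "\<And>C. card C < n \<Longrightarrow> C \<subseteq> {..<t} \<Longrightarrow> g C = phi C"
      using less.IH by blast
    show ?case
    proof (intro allI impI)
      fix B assume B: "B \<subseteq> {..<t}" "card B = n"
      have finB: "finite B" using B(1) finite_subset by blast
      consider "n = 0" | "n = 1" | "n \<ge> 2" by linarith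
      then show "g B = phi B"
      proof cases
        case 1
        then have "B = {}" using finB B by simp
        then show ?thesis unfolding S_def phi_def by auto
      next
        case 2
        then obtain i where "B = {i}" using B card_1_singletonE by blast
        then show ?thesis using a B unfolding phi_def by auto
      next
        case 3
        obtain i where i: "i \<in> B" using 3 B by fastforce
        have "card (B - {i}) \<ge> 1" using 3 B i finB by simp
        then have "B - {i} \<noteq> {}" by (metis card.empty not_one_le_zero)
        then obtain j where j: "j \<in> B - {i}" by blast
        then have ij: "i \<noteq> j" "j \<in> B" by auto
        define B' where "B' = B - {i, j}"
        have Bi: "B - {i} = insert j B'" "j \<notin> B'" using ij i unfolding B'_def by auto
        have Bj: "B - {j} = insert i B'" "i \<notin> B'" using ij i unfolding B'_def by auto
        have BB: "B = insert i (insert j B')" using ij i unfolding B'_def by auto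
        have subs: "B' \<subseteq> {..<t}" "B - {i} \<subseteq> {..<t}" "B - {j} \<subseteq> {..<t}"
          "i \<in> {..<t}" "j \<in> {..<t}"
          using B i ij unfolding B'_def by auto
        have cBi: "card (B - {i}) < n" using B i finB 3 by (simp add: card_Diff1_less)
        have cBj: "card (B - {j}) < n" using B ij finB 3 by (simp add: card_Diff1_less)
        have cB': "card B' < n"
        proof -
          have "card B' < card (B - {i})" unfolding Bi(1) using Bi(2) finB
            by (simp add: B'_def)
          then show ?thesis using cBi by linarith
        qed
        have gB': "g B' = phi B'" using IH[OF cB' subs(1)] .
        have gBi: "g (B - {i}) = phi (B - {i})" using IH[OF cBi subs(2)] .
        have gBj: "g (B - {j}) = phi (B - {j})" using IH[OF cBj subs(3)] .
        have aij: "a i \<noteq> a j" using inj_on_eq_iff[OF ainj subs(4) subs(5)] ij by simp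
        have m1: "\<forall>w. w \<in> g (B - {j}) \<longleftrightarrow> ((w \<in> phi B') \<noteq> (w = a i))"
        proof
          fix w
          have "w \<in> a ` (B - {j}) \<longleftrightarrow> ((w \<in> a ` B') \<noteq> (w = a i))"
            unfolding Bj(1) using img_ins[OF ainj subs(4) subs(1) Bj(2)] .
          then show "w \<in> g (B - {j}) \<longleftrightarrow> ((w \<in> phi B') \<noteq> (w = a i))"
            using gBj unfolding phi_def by auto
        qed
        have m2: "\<forall>w. w \<in> g (B - {i}) \<longleftrightarrow> ((w \<in> phi B') \<noteq> (w = a j))"
        proof
          fix w
          have "w \<in> a ` (B - {i}) \<longleftrightarrow> ((w \<in> a ` B') \<noteq> (w = a j))"
            unfolding Bi(1) using img_ins[OF ainj subs(5) subs(1) Bi(2)] .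
          then show "w \<in> g (B - {i}) \<longleftrightarrow> ((w \<in> phi B') \<noteq> (w = a j))"
            using gBi unfolding phi_def by auto
        qed
        have t1: "tar_adj (g (B - {j})) (g B)"
          using gadj[OF B(1) subs(3)] hsing[of B j] ij(2) tar_adj_sym by blast
        have t2: "tar_adj (g (B - {i})) (g B)"
          using gadj[OF B(1) subs(2)] hsing[of B i] i tar_adj_sym by blast
        have c: "g B = phi B' \<or> (\<forall>w. w\<in>g B \<longleftrightarrow> ((w\<in>phi B') \<noteq> (w=a i \<or> w=a j)))"
          using common[OF aij t1 t2 m1 m2] .
        have "g B \<noteq> phi B'"
        proof
          assume "g B = phi B'"
          then have "B = B'" using ginj[OF B(1) subs(1)] gB' by simp
          then show False using i Bj(2) by simp
        qed
        with c have c2: "\<forall>w. w\<in>g B \<longleftrightarrow> ((w\<in>phi B') \<noteq> (w=a i \<or> w=a j))" by blast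
        have ij': "insert j B' \<subseteq> {..<t}" "i \<notin> insert j B'" using subs Bj(2) ij(1) by auto
        show ?thesis
        proof (rule set_eqI)
          fix w
          have "w \<in> a ` B \<longleftrightarrow> ((w \<in> a ` insert j B') \<noteq> (w = a i))"
            unfolding BB using img_ins[OF ainj subs(4) ij'] .
          moreover have "w \<in> a ` insert j B' \<longleftrightarrow> ((w \<in> a ` B') \<noteq> (w = a j))"
            using img_ins[OF ainj subs(5) subs(1) Bi(2)] .
          ultimately show "w \<in> g B \<longleftrightarrow> w \<in> phi B"
            using c2 aij unfolding phi_def by auto
        qed
      qed
    qed
  qed
  have Hphi: "H = phi ` Pow {..<t}"
    unfolding Himg using main by (auto intro!: image_cong)
  define S0 where "S0 = S - a ` {..<t}"
  define T where "T = S \<union> a ` {..<t}"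
  have "{R. S0 \<subseteq> R \<and> R \<subseteq> T} \<subseteq> phi ` Pow {..<t}"
  proof
    fix R assume R: "R \<in> {R. S0 \<subseteq> R \<and> R \<subseteq> T}"
    define B where "B = {i. i < t \<and> (a i \<in> R) \<noteq> (a i \<in> S)}"
    have "phi B = R"
    proof (rule set_eqI)
      fix w
      show "w \<in> phi B \<longleftrightarrow> w \<in> R"
      proof (cases "w \<in> a ` {..<t}")
        case True
        then obtain i where i: "i < t" "w = a i" by blast
        have "w \<in> a ` B \<longleftrightarrow> i \<in> B" using ainj i unfolding B_def inj_on_def by auto
        then show ?thesis using i unfolding phi_def B_def by auto
      next
        case False
        then have "w \<notin> a ` B" unfolding B_def by auto
        then show ?thesis using False R unfolding phi_def S0_def T_def by auto
      qed
    qed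
    then show "R \<in> phi ` Pow {..<t}" unfolding B_def by blast
  qed
  moreover have "phi ` Pow {..<t} \<subseteq> {R. S0 \<subseteq> R \<and> R \<subseteq> T}"
    unfolding phi_def S0_def T_def by auto
  ultimately have HI: "H = {R. S0 \<subseteq> R \<and> R \<subseteq> T}" using Hphi by blast
  have "T \<in> H" unfolding HI S0_def T_def by auto
  then have TV: "T \<subseteq> V" using HV by blast
  have "T - S0 = a ` {..<t}" unfolding T_def S0_def by auto
  then have "card (T - S0) = t" using ainj by (simp add: card_image)
  moreover have "S0 \<subseteq> T" unfolding S0_def T_def by auto
  ultimately show ?thesis using TV HI by blast
qed

end
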